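(* Let $W\in\mathbb{R}^{m\times n}$ have nonzero columns $w_1,\dots,w_n$, $F:=WW^\top$, $r:=\operatorname{rank}(W)\ge1$, $\ell_i:=w_i^\top F^+w_i$, $D_i:=\|w_i\|^4/(w_i^\top Fw_i)$ and $\sigma_i:=1-D_i/\ell_i$. Assume $\sum_{i=1}^nD_i\ge(1-\varepsilon)r$. Then for every $\tau\in(0,1)$, $$\frac1r\sum_{i:\sigma_i\ge\tau}\ell_i\le\frac{\varepsilon}{\tau}.$$
   Context: $F^+$ is the Moore–Penrose pseudoinverse of $F$. *)

theory Defs
  imports "HOL-Analysis.Analysis"
begin

definition pseudo_inverse :: "real^'m^'n \<Rightarrow> real^'n^'m" where
  "pseudo_inverse A = (THE X. A ** X ** A = A \<and> X ** A ** X = X \<and>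
       transpose (A ** X) = A ** X \<and> transpose (X ** A) = X ** A)"

end

theory Submission
  imports Defs
begin

lemma inner_mv: "(x::real^'m) \<bullet> (A *v y) = (transpose A *v x) \<bullet> y"
  by (simp add: dot_lmul_matrix)

lemma construct:
  fixes W :: "real^'n^'m"
  defines "F \<equiv> W ** transpose W"
  shows "\<exists>X. F ** X ** F = F \<and> X ** F ** X = X \<and> transpose (F ** X) = F ** X \<and> transpose (X ** F) = X ** F
     \<and> trace (X ** F) = real (rank W) \<and> (\<forall>x. F *v (X *v (W *v x)) = W *v x)"
proof -
  define f where "f = (\<lambda>x. F *v x)"
  define V where "V = range f"
  have linf: "linear f" unfolding f_def by simp
  have subV: "subspace V" unfolding V_def using linf by (metis subspace_UNIV linear_subspace_image)
  have Fsym: "x \<bullet> f y = f x \<bullet> y" for x y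
    unfolding f_def by (simp add: inner_mv F_def matrix_transpose_mul)
  have fW: "f x = W *v (transpose W *v x)" for x
    unfolding f_def F_def by (metis matrix_vector_mul_assoc)
  obtain B where B: "B \<subseteq> V" "pairwise orthogonal B" "\<And>x. x \<in> B \<Longrightarrow> norm x = 1"
      "independent B" "card B = dim V" "span B = V"
    using orthonormal_basis_subspace[OF subV] by metis
  have finB: "finite B" using B(4) by (simp add: finiteI_independent)
  have bb: "b \<bullet> b = 1" if "b \<in> B" for b using B(3)[OF that] by (simp add: dot_square_norm)
  have bc: "b \<bullet> c = 0" if "b \<in> B" "c \<in> B" "b \<noteq> c" for b c
    using B(2) that unfolding pairwise_def orthogonal_def by blast
  define p where "p = (\<lambda>x. \<Sum>b\<in>B. (x \<bullet> b) *\<^sub>R b)"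
  have linp: "linear p" unfolding p_def
    by (rule linearI) (simp_all add: inner_add_left scaleR_add_left sum.distrib scaleR_sum_right)
  have pV: "p x \<in> V" for x
    proof - have "(\<Sum>b\<in>B. (x \<bullet> b) *\<^sub>R b) \<in> span B" by (intro span_sum span_scale span_base) auto then show ?thesis unfolding p_def using B(6) by simp qed
  have psym: "x \<bullet> p y = p x \<bullet> y" for x y
    unfolding p_def by (simp add: inner_sum_right inner_sum_left inner_commute mult.commute)
  have orth_b: "(x - p x) \<bullet> c = 0" if "c \<in> B" for x c
  proof -
    have "p x \<bullet> c = (\<Sum>b\<in>B. (x \<bullet> b) * (b \<bullet> c))" unfolding p_def by (simp add: inner_sum_left)
    also have "\<dots> = (\<Sum>b\<in>B. if b = c then x \<bullet> c else 0)"
      by (rule sum.cong) (auto simp: bb bc that)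
    also have "\<dots> = x \<bullet> c" using finB that by simp
    finally show ?thesis by (simp add: inner_diff_left)
  qed
  have orthV: "(x - p x) \<bullet> v = 0" if "v \<in> V" for x v
    using orthogonal_to_span[of v B "x - p x"] orth_b B(6) that unfolding orthogonal_def by auto
  have pid: "p v = v" if "v \<in> V" for v
  proof -
    have "v - p v \<in> V" using that pV subV by (simp add: subspace_diff)
    then have "(v - p v) \<bullet> (v - p v) = 0" using orthV by blast
    then show ?thesis by simp
  qed
  have fp: "f (p x) = f x" for x
  proof -
    let ?z = "x - p x"
    have "f ?z \<bullet> f ?z = ?z \<bullet> f (f ?z)" using Fsym by simp
    also have "\<dots> = 0" using orthV[of "f (f ?z)" x] unfolding V_def by simp
    finally have "f ?z = 0" by simp
    then show ?thesis using linear_diff[OF linf] by simp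
  qed
  have WV: "W *v x \<in> V" for x
  proof -
    let ?v = "W *v x"
    let ?z = "?v - p ?v"
    have "?z \<bullet> f ?z = 0" using orthV[of "f ?z"] unfolding V_def by simp
    then have "(transpose W *v ?z) \<bullet> (transpose W *v ?z) = 0"
      unfolding fW by (simp add: inner_mv)
    then have tz: "transpose W *v ?z = 0" by simp
    have "?z \<bullet> ?v = 0" by (metis inner_mv tz inner_zero_left)
    moreover have "?z \<bullet> p ?v = 0" using orthV pV by blast
    ultimately have "?z \<bullet> ?z = 0" by (simp add: inner_diff_right)
    then have "?z = 0" by simp
    then show ?thesis using pV by (metis eq_iff_diff_eq_0)
  qed
  have injf: "inj_on f V"
  proof (rule inj_onI)
    fix x y assume xy: "x \<in> V" "y \<in> V" "f x = f y"
    then obtain a b where ab: "x = f a" "y = f b" unfolding V_def by blast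
    then have u: "x - y = f (a - b)" using linear_diff[OF linf] by simp
    have "f (x - y) = 0" using xy linear_diff[OF linf] by simp
    then have "(x - y) \<bullet> (x - y) = 0" using Fsym[of "a - b" "x - y"] u by simp
    then show "x = y" by simp
  qed
  obtain g where g: "range g \<subseteq> V" "linear g" "\<forall>v\<in>V. g (f v) = v"
    using vec.linear_exists_left_inverse_on[of f V] linf subV injf
    by (auto simp: linear_matrix_vector_mul_eq subspace_vec_eq)
  define X where "X = matrix (g \<circ> p)"
  have Xv: "X *v y = g (p y)" for y
    unfolding X_def using g(2) linp
    by (simp add: matrix_works linear_matrix_vector_mul_eq linear_compose)
  have fg: "f (g (p y)) = p y" for y
  proof -
    obtain z where z: "p y = f z" using pV unfolding V_def by blast
    have "p y = f (p z)" using z fp by simp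
    moreover have "g (f (p z)) = p z" using g(3) pV by blast
    ultimately show ?thesis by simp
  qed
  have gf: "g (p (f x)) = p x" for x
  proof -
    have "p (f x) = f (p x)" using pid[of "f x"] fp unfolding V_def by simp
    then show ?thesis using g(3) pV by simp
  qed
  have FX: "(F ** X) *v y = p y" for y
    by (simp add: matrix_vector_mul_assoc[symmetric] Xv fg flip: f_def)
  have XF: "(X ** F) *v y = p y" for y
    by (simp add: matrix_vector_mul_assoc[symmetric] Xv gf flip: f_def)
  have sym_of_inner: "transpose M = M" if "\<And>x y. x \<bullet> (M *v y) = (M *v x) \<bullet> y" for M :: "real^'m^'m"
  proof -
    have "transpose M *v x = M *v x" for x
    proof -
      have "(transpose M *v x - M *v x) \<bullet> y = 0" for y
        using that[of x y] inner_mv[of x M y] by (simp add: inner_diff_left)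
      then show ?thesis by (metis eq_iff_diff_eq_0 inner_eq_zero_iff)
    qed
    then show ?thesis by (simp add: matrix_eq)
  qed
  have c1p: "F *v (X *v (F *v x)) = F *v x" for x
    using fg[of "F *v x"] pid[of "F *v x"] Xv unfolding f_def V_def by simp
  have c1: "F ** X ** F = F"
    unfolding matrix_eq by (simp add: matrix_vector_mul_assoc[symmetric] c1p)
  have c2p: "X *v (F *v (X *v y)) = X *v y" for y
  proof -
    have "F *v (X *v y) = p y" using fg[of y] Xv unfolding f_def by simp
    then show ?thesis using Xv pid[OF pV] by simp
  qed
  have c2: "X ** F ** X = X"
    unfolding matrix_eq by (simp add: matrix_vector_mul_assoc[symmetric] c2p)
  have c3: "transpose (F ** X) = F ** X"
    by (rule sym_of_inner) (simp add: FX psym)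
  have c4: "transpose (X ** F) = X ** F"
    by (rule sym_of_inner) (simp add: XF psym)
  have c5: "F *v (X *v (W *v x)) = W *v x" for x
    using FX[of "W *v x"] pid[OF WV] by (simp add: matrix_vector_mul_assoc matrix_mul_assoc)
  have rk: "rank W = dim V"
  proof -
    have "range (\<lambda>x. W *v x) = V"
    proof
      show "range (\<lambda>x. W *v x) \<subseteq> V" using WV by auto
      show "V \<subseteq> range (\<lambda>x. W *v x)" unfolding V_def using fW by auto
    qed
    then show ?thesis by (simp add: rank_dim_range)
  qed
  have "trace (X ** F) = (\<Sum>k\<in>UNIV. ((X ** F) *v axis k 1) $ k)"
    unfolding trace_def by (simp add: matrix_vector_mult_basis column_def)
  also have "\<dots> = (\<Sum>k\<in>UNIV. \<Sum>b\<in>B. b $ k * b $ k)"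
    unfolding XF p_def by (simp add: inner_axis' sum_component)
  also have "\<dots> = (\<Sum>b\<in>B. b \<bullet> b)"
    by (subst sum.swap) (simp add: inner_vec_def)
  also have "\<dots> = real (card B)" using bb by simp
  finally have c6: "trace (X ** F) = real (rank W)" using rk B(5) by simp
  show ?thesis using c1 c2 c3 c4 c5 c6 by blast
qed

lemma pinv_unique:
  fixes A :: "real^'m^'n" and X Y :: "real^'n^'m"
  assumes "A ** X ** A = A" "X ** A ** X = X" "transpose (A ** X) = A ** X" "transpose (X ** A) = X ** A"
    and "A ** Y ** A = A" "Y ** A ** Y = Y" "transpose (A ** Y) = A ** Y" "transpose (Y ** A) = Y ** A"
  shows "X = Y"
proof -
  have "X = X ** (A ** X)" using assms(2) by (simp add: matrix_mul_assoc)
  also have "\<dots> = X ** transpose (A ** X)" using assms(3) by simp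
  also have "\<dots> = X ** transpose X ** transpose A" by (simp add: matrix_transpose_mul matrix_mul_assoc)
  also have "\<dots> = X ** transpose X ** transpose (A ** Y ** A)" using assms(5) by simp
  also have "\<dots> = X ** transpose (A ** X) ** transpose (A ** Y)" by (simp add: matrix_transpose_mul matrix_mul_assoc)
  also have "\<dots> = X ** (A ** X) ** (A ** Y)" using assms(3,7) by simp
  also have "\<dots> = X ** A ** Y" using assms(2) by (metis matrix_mul_assoc)
  finally have 1: "X = X ** A ** Y" .
  have "Y = (Y ** A) ** Y" using assms(6) by (simp add: matrix_mul_assoc)
  also have "\<dots> = transpose (Y ** A) ** Y" using assms(8) by simp
  also have "\<dots> = transpose A ** transpose Y ** Y" by (simp add: matrix_transpose_mul)
  also have "\<dots> = transpose (A ** X ** A) ** transpose Y ** Y" using assms(1) by simp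
  also have "\<dots> = transpose (X ** A) ** transpose (Y ** A) ** Y" by (simp add: matrix_transpose_mul matrix_mul_assoc)
  also have "\<dots> = (X ** A) ** (Y ** A) ** Y" using assms(4,8) by simp
  also have "\<dots> = X ** A ** Y" using assms(6) by (metis matrix_mul_assoc)
  finally show ?thesis using 1 by simp
qed

lemma column_axis: "column i (W::real^'n^'m) = W *v axis i 1"
  by (simp add: cart_eq_inner_axis column_def matrix_mult_dot)

theorem mainTheorem18:
  fixes W :: "real^'n^'m" and \<epsilon> \<tau> :: real
  assumes nonzero: "\<And>i. column i W \<noteq> 0"
    and rank_pos: "rank W \<ge> 1"
    and hyp: "(\<Sum>i\<in>UNIV. norm (column i W) ^ 4 / (column i W \<bullet> ((W ** transpose W) *v column i W)))
              \<ge> (1 - \<epsilon>) * real (rank W)"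
    and tau: "0 < \<tau>" "\<tau> < 1"
  shows "(let F = W ** transpose W;
              lev = (\<lambda>i. column i W \<bullet> (pseudo_inverse F *v column i W));
              D = (\<lambda>i. norm (column i W) ^ 4 / (column i W \<bullet> (F *v column i W)));
              \<sigma> = (\<lambda>i. 1 - D i / lev i)
          in (1 / real (rank W)) * (\<Sum>i\<in>{i. \<sigma> i \<ge> \<tau>}. lev i) \<le> \<epsilon> / \<tau>)"
proof -
  define F where "F = W ** transpose W"
  obtain X where X: "F ** X ** F = F" "X ** F ** X = X" "transpose (F ** X) = F ** X" "transpose (X ** F) = X ** F"
     "trace (X ** F) = real (rank W)" "\<And>x. F *v (X *v (W *v x)) = W *v x"
    using construct[of W] unfolding F_def by blast
  have PX: "pseudo_inverse F = X"
    unfolding pseudo_inverse_def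
    by (rule the_equality) (use X pinv_unique in blast)+
  define lev where "lev = (\<lambda>i. column i W \<bullet> (X *v column i W))"
  define D where "D = (\<lambda>i. norm (column i W) ^ 4 / (column i W \<bullet> (F *v column i W)))"
  have LD: "D i \<le> lev i \<and> 0 < D i" for i
  proof -
    let ?w = "column i W"
    let ?u = "X *v ?w"
    let ?a = "transpose W *v ?w"
    let ?b = "transpose W *v ?u"
    have Fu: "F *v ?u = ?w" using X(6)[of "axis i 1"] by (simp add: column_axis)
    have FW: "F *v y = W *v (transpose W *v y)" for y unfolding F_def by (metis matrix_vector_mul_assoc)
    have 1: "?w \<bullet> ?w = ?a \<bullet> ?b"
      using Fu FW[of ?u] inner_mv[of ?w W ?b] by simp
    have 2: "lev i = ?b \<bullet> ?b"
      unfolding lev_def using Fu FW[of ?u] inner_mv[of ?u W ?b] by (simp add: inner_commute)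
    have 3: "?w \<bullet> (F *v ?w) = ?a \<bullet> ?a"
      using FW[of ?w] inner_mv[of ?w W ?a] by simp
    have ww: "?w \<bullet> ?w > 0" using nonzero[of i] by simp
    have a0: "?a \<bullet> ?a > 0"
    proof (rule ccontr)
      assume "\<not> ?thesis"
      then have "?a = 0" by (simp add: not_less)
      then have "?w \<bullet> (W *v axis i 1) = 0" using inner_mv[of ?w W "axis i 1"] by simp
      then show False using ww by (simp add: column_axis)
    qed
    have cs: "(?a \<bullet> ?b)^2 \<le> (?a \<bullet> ?a) * (?b \<bullet> ?b)"
      by (rule Cauchy_Schwarz_ineq)
    have n4: "norm ?w ^ 4 = (?w \<bullet> ?w)^2"
      by (simp add: power2_norm_eq_inner[symmetric] flip: power_mult)
    have "D i = (?a \<bullet> ?b)^2 / (?a \<bullet> ?a)" unfolding D_def n4 1 3 ..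
    then show ?thesis using cs a0 ww 1 2
      by (auto simp: divide_le_eq mult.commute)
  qed
  have sumlev: "(\<Sum>i\<in>UNIV. lev i) = real (rank W)"
  proof -
    have "(\<Sum>i\<in>UNIV. lev i) = trace (transpose W ** (X ** W))"
    proof -
      have "lev i = (transpose W ** (X ** W)) $ i $ i" for i
      proof -
        have "X *v column i W = column i (X ** W)"
          by (simp add: matrix_vector_mult_basis[symmetric] matrix_vector_mul_assoc)
        then show ?thesis unfolding lev_def
          by (simp add: matrix_matrix_mult_def transpose_def inner_vec_def column_def)
      qed
      then show ?thesis unfolding trace_def by simp
    qed
    also have "\<dots> = trace ((X ** W) ** transpose W)"
      by (rule trace_mul_sym)
    also have "\<dots> = trace (X ** F)"
      unfolding F_def by (simp add: matrix_mul_assoc)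
    finally show ?thesis using X(5) by simp
  qed
  define \<sigma> where "\<sigma> = (\<lambda>i. 1 - D i / lev i)"
  have ls: "lev i * \<sigma> i = lev i - D i" "lev i * \<sigma> i \<ge> 0" for i
    using LD[of i] unfolding \<sigma>_def by (auto simp: field_simps)
  define S where "S = {i. \<sigma> i \<ge> \<tau>}"
  have r: "real (rank W) > 0" using rank_pos by simp
  have "\<tau> * (\<Sum>i\<in>S. lev i) = (\<Sum>i\<in>S. \<tau> * lev i)" by (simp add: sum_distrib_left)
  also have "\<dots> \<le> (\<Sum>i\<in>S. lev i * \<sigma> i)"
  proof (rule sum_mono)
    fix i assume "i \<in> S"
    then show "\<tau> * lev i \<le> lev i * \<sigma> i" using LD[of i] unfolding S_def
      by (simp add: mult.commute mult_left_mono)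
  qed
  also have "\<dots> \<le> (\<Sum>i\<in>UNIV. lev i * \<sigma> i)"
    by (rule sum_mono2) (auto simp: ls LD)
  also have "\<dots> = (\<Sum>i\<in>UNIV. lev i) - (\<Sum>i\<in>UNIV. D i)" by (simp add: ls sum_subtractf)
  also have "\<dots> \<le> \<epsilon> * real (rank W)" using hyp sumlev unfolding D_def F_def by (simp add: algebra_simps)
  finally have main: "\<tau> * (\<Sum>i\<in>S. lev i) \<le> \<epsilon> * real (rank W)" .
  have "(1 / real (rank W)) * (\<Sum>i\<in>S. lev i) \<le> \<epsilon> / \<tau>"
    using main r tau by (simp add: field_simps)
  then show ?thesis unfolding Let_def PX[unfolded F_def]
    by (simp add: S_def \<sigma>_def D_def lev_def F_def)
qed

end
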